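(* Let $p,q>0$ and $\alpha,\beta,\nu,\gamma\in\mathbb{R}$ with $\nu\ln p\neq\alpha\ln q$ (equivalently $p^\nu\neq q^\alpha$). Define for $n\in\mathbb{N}$ $$f(n)=q^{\beta}\left(\frac{p^{n\nu}-q^{n\alpha}}{p^{\nu}-q^{\alpha}}+2\gamma\,\frac{p^{n\nu}-(-1)^{n}q^{n\alpha}}{p^{\nu}+q^{\alpha}}\right).$$ Then $f(n)>0$ for all integers $n\geq 1$ provided that $-2\gamma<1$ in the case $\nu\ln p>\alpha\ln q$, and $-1<2\gamma<-\dfrac{p^{\nu}+q^{\alpha}}{p^{\nu}-q^{\alpha}}$ in the case $\nu\ln p<\alpha\ln q$.
   Context: $f$ is the structure function of the $(p,q;\alpha,\beta,\nu;\gamma)$-deformed oscillator algebra (defined by $aa^{\dagger}-p^{\nu}a^{\dagger}a=(1+2\gamma K)q^{\alpha N+\beta}$, $[N,a]=-a$, $[N,a^\dagger]=a^\dagger$, $Ka=-aK$, $Ka^\dagger=-a^\dagger K$, $[N,K]=0$) in the case $p^\nu\neq q^\alpha$; note $f(0)=0$. *)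

theory Defs
  imports Complex_Main
begin

definition f_struct :: "real \<Rightarrow> real \<Rightarrow> real \<Rightarrow> real \<Rightarrow> real \<Rightarrow> real \<Rightarrow> nat \<Rightarrow> real" where
  "f_struct p q \<alpha> \<beta> \<nu> \<gamma> n =
     q powr \<beta> * ((p powr (real n * \<nu>) - q powr (real n * \<alpha>)) / (p powr \<nu> - q powr \<alpha>)
       + 2 * \<gamma> * (p powr (real n * \<nu>) - (-1) ^ n * q powr (real n * \<alpha>)) / (p powr \<nu> + q powr \<alpha>))"

end

theory Submission
  imports Defs
begin

lemma TleS:
  fixes a b :: real and n :: nat
  assumes a: "a > 0" and b: "b > 0" and ab: "a \<noteq> b" and n: "n \<ge> 1"
    and nc: "\<not> (even n \<and> a < b)"
  shows "(a^n - (-1)^n*b^n)/(a+b) \<le> (a^n-b^n)/(a-b)"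
proof -
  obtain m where m: "n = Suc m" using n by (cases n) auto
  have anbn: "a^n = a * a^m" "b^n = b*b^m" using m by auto
  show ?thesis
  proof (cases "a > b")
    case True
    have amb: "a^m \<ge> b^m" using True b by (intro power_mono) auto
    have "(a^n - (-1)^n*b^n)*(a-b) \<le> (a^n-b^n)*(a+b)"
    proof (cases "even n")
      case True
      then have "(-1::real)^n = 1" by simp
      moreover have "b*a^n \<ge> b*b^n" using \<open>a > b\<close> b by (intro mult_left_mono power_mono) auto
      ultimately show ?thesis
        by (simp add: algebra_simps)
    next
      case False
      then have "(-1::real)^n = -1" by simp
      moreover have "a*b*a^m \<ge> a*b*b^m" using amb a b by (intro mult_left_mono) auto
      ultimately show ?thesis using anbn
        by (simp add: algebra_simps)
    qed
    then show ?thesis using True a b by (simp add: divide_simps)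
  next
    case False
    then have lt: "a < b" using ab by auto
    then have odd: "odd n" using nc by auto
    then have "(-1::real)^n = -1" by simp
    have amb: "a^m \<le> b^m" using lt a by (intro power_mono) auto
    have "a*b*a^m \<le> a*b*b^m" using amb a b by (intro mult_left_mono) auto
    then have "(a^n - (-1)^n*b^n)*(b-a) \<le> (b^n-a^n)*(a+b)"
      using anbn \<open>(-1::real)^n = -1\<close> by (simp add: algebra_simps)
    moreover have "(a^n-b^n)/(a-b) = (b^n-a^n)/(b-a)"
      by (metis minus_diff_eq minus_divide_divide)
    moreover have "0 < b - a" "0 < a + b" using lt a b by auto
    ultimately show ?thesis by (simp add: frac_le_eq divide_nonpos_pos)
  qed
qed

lemma key:
  fixes a b g :: real and n :: nat
  assumes a: "a > 0" and b: "b > 0" and ab: "a \<noteq> b" and n: "n \<ge> 1"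
    and g1: "-1 < g" and g2: "a < b \<longrightarrow> g < -(a+b)/(a-b)"
  shows "(a^n-b^n)/(a-b) + g*(a^n - (-1)^n*b^n)/(a+b) > 0"
proof (cases "even n \<and> a < b")
  case True
  then have e: "(-1::real)^n = 1" by simp
  have lt: "a^n < b^n" using True a n by (intro power_strict_mono) auto
  have "g/(a+b) < -1/(a-b)" using g2 True a b
    by (simp add: divide_simps)
  then have c: "1/(a-b) + g/(a+b) < 0" by simp
  have "(a^n-b^n)/(a-b) + g*(a^n - (-1)^n*b^n)/(a+b) = (a^n-b^n) * (1/(a-b) + g/(a+b))"
    using e True a b by (simp add: field_simps)
  also have "\<dots> > 0" using lt c by (intro mult_neg_neg) auto
  finally show ?thesis .
next
  case False
  define S where "S = (a^n-b^n)/(a-b)"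
  define T where "T = (a^n - (-1)^n*b^n)/(a+b)"
  have TS: "T \<le> S" unfolding S_def T_def using TleS[OF a b ab n False] .
  have Sp: "S > 0"
  proof (cases "a > b")
    case True
    then have "a^n > b^n" using b n by (intro power_strict_mono) auto
    then show ?thesis using True unfolding S_def by simp
  next
    case False
    then have "a < b" using ab by auto
    then have "a^n < b^n" using a n by (intro power_strict_mono) auto
    then show ?thesis using \<open>a < b\<close> unfolding S_def by (simp add: divide_neg_neg)
  qed
  have Tp: "T > 0"
  proof (cases "even n")
    case True
    then have "a > b" using False ab by auto
    then have "a^n > b^n" using b n by (intro power_strict_mono) auto
    then show ?thesis using True a b unfolding T_def by simp
  next
    case False
    then show ?thesis using a b unfolding T_def by (simp add: add_pos_pos)
  qed
  have "S + g*T > 0"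
  proof (cases "g \<ge> 0")
    case True then show ?thesis using Sp Tp mult_nonneg_nonneg[of g T] by linarith
  next
    case False
    then have "g*T \<ge> g*S" using TS by (intro mult_left_mono_neg) auto
    moreover have "(1+g)*S > 0" using g1 Sp by simp
    ultimately show ?thesis by (simp add: algebra_simps)
  qed
  then show ?thesis unfolding S_def T_def by simp
qed

theorem proposition2:
  fixes p q \<alpha> \<beta> \<nu> \<gamma> :: real
  assumes "p > 0" and "q > 0"
    and "\<nu> * ln p \<noteq> \<alpha> * ln q"
    and "\<nu> * ln p > \<alpha> * ln q \<longrightarrow> -2 * \<gamma> < 1"
    and "\<nu> * ln p < \<alpha> * ln q \<longrightarrow>
           -1 < 2 * \<gamma> \<and> 2 * \<gamma> < - (p powr \<nu> + q powr \<alpha>) / (p powr \<nu> - q powr \<alpha>)"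
  shows "\<forall>n::nat. n \<ge> 1 \<longrightarrow> f_struct p q \<alpha> \<beta> \<nu> \<gamma> n > 0"
proof (intro allI impI)
  fix n :: nat assume n: "n \<ge> 1"
  define a where "a = p powr \<nu>"
  define b where "b = q powr \<alpha>"
  have a: "a > 0" and b: "b > 0" using assms unfolding a_def b_def by auto
  have ae: "a = exp (\<nu> * ln p)" using assms(1) unfolding a_def powr_def by (simp add: mult.commute)
  have be: "b = exp (\<alpha> * ln q)" using assms(2) unfolding b_def powr_def by (simp add: mult.commute)
  have iff: "a < b \<longleftrightarrow> \<nu> * ln p < \<alpha> * ln q" unfolding ae be by simp
  have ab: "a \<noteq> b" using assms(3) unfolding ae be by simp
  have g1: "-1 < 2*\<gamma>"
  proof (cases "a < b")
    case True then show ?thesis using assms(5) iff by auto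
  next
    case False
    then have "\<alpha> * ln q < \<nu> * ln p" using iff ab assms(3) by auto
    then show ?thesis using assms(4) by auto
  qed
  have g2: "a < b \<longrightarrow> 2*\<gamma> < -(a+b)/(a-b)" using assms(5) iff unfolding a_def b_def by auto
  have pa: "p powr (real n * \<nu>) = a^n" unfolding a_def
    using assms(1) by (simp add: powr_powr[symmetric] powr_realpow mult.commute)
  have pb: "q powr (real n * \<alpha>) = b^n" unfolding b_def
    using assms(2) by (simp add: powr_powr[symmetric] powr_realpow mult.commute)
  have "(a^n-b^n)/(a-b) + 2*\<gamma>*(a^n - (-1)^n*b^n)/(a+b) > 0"
    using key[OF a b ab n g1 g2] .
  then show "f_struct p q \<alpha> \<beta> \<nu> \<gamma> n > 0"
    unfolding f_struct_def pa pb a_def[symmetric] b_def[symmetric]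
    using assms(2) by simp
qed

end
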